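(* Let $V$ be real-valued and absolutely continuous on $[0,\pi]$ and let $a\in(0,\pi)$. There is a constant $C>0$ (depending on $V$ and $a$) such that for all $z\in\mathbb C$ and $n\in\mathbb N$, $$\left|\int_0^\pi F(x,z)\,\mathcal R_{a\pi}(x)\cos(nx)\,dx\right|\le C\frac{e^{\pi|\operatorname{Im}\sqrt z|}}{n^2}\left(1+\frac{1+|z|}{1+\pi|z|^{1/2}}\right).$$
   Context: $\sqrt{\cdot}$ is the principal branch. $\xi(x,z)$ is the solution of $-\xi''+V\xi=z\xi$, $\xi(0,z)=1$, $\xi'(0,z)=0$, and $F(x,z):=\xi(x,z)-\cos(\sqrt z\,x)$. $\mathcal R_{a\pi}(x)=1$ for $x\in[0,a]$ and $\frac{\pi-x}{\pi-a}$ for $x\in(a,\pi]$. *)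

theory Defs
  imports "HOL-Analysis.Analysis"
begin

definition abs_continuous_on :: "real \<Rightarrow> real \<Rightarrow> (real \<Rightarrow> real) \<Rightarrow> bool" where
  "abs_continuous_on a b f \<longleftrightarrow>
     (\<forall>\<epsilon>>0. \<exists>\<delta>>0. \<forall>(n::nat) (u::nat \<Rightarrow> real) (v::nat \<Rightarrow> real).
        (\<forall>i<n. a \<le> u i \<and> u i \<le> v i \<and> v i \<le> b) \<and>
        (\<forall>i<n. \<forall>j<n. i \<noteq> j \<longrightarrow> v i \<le> u j \<or> v j \<le> u i) \<and>
        (\<Sum>i<n. v i - u i) < \<delta>
        \<longrightarrow> (\<Sum>i<n. \<bar>f (v i) - f (u i)\<bar>) < \<epsilon>)"

definition is_xi_solution ::
  "(real \<Rightarrow> real) \<Rightarrow> complex \<Rightarrow> (real \<Rightarrow> complex) \<Rightarrow> (real \<Rightarrow> complex) \<Rightarrow> bool" where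
  "is_xi_solution V z xi dxi \<longleftrightarrow>
     xi 0 = 1 \<and> dxi 0 = 0 \<and>
     (\<forall>x\<in>{0..pi}. (xi has_vector_derivative dxi x) (at x within {0..pi})) \<and>
     (\<forall>x\<in>{0..pi}. (dxi has_vector_derivative ((complex_of_real (V x) - z) * xi x))
                      (at x within {0..pi}))"

definition R_api :: "real \<Rightarrow> real \<Rightarrow> real" where
  "R_api a x = (if x \<le> a then 1 else (pi - x) / (pi - a))"

end

theory Submission
  imports Defs
begin

lemma gronwall_deriv:
  fixes E E' :: "real \<Rightarrow> real"
  assumes d: "\<And>t. t \<in> {0..b} \<Longrightarrow> (E has_real_derivative E' t) (at t within {0..b})"
    and le: "\<And>t. t \<in> {0..b} \<Longrightarrow> E' t \<le> L * E t"
    and x: "0 \<le> x" "x \<le> b"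
  shows "E x \<le> E 0 * exp (L * x)"
proof -
  define f where "f t = E t * exp (- L * t)" for t
  have df: "(f has_derivative (*) ((E' t - L * E t) * exp (- L * t))) (at t within {0..x})"
    if t: "t \<in> {0..x}" for t
  proof -
    have "(E has_real_derivative E' t) (at t within {0..x})"
      using d[of t] t x by (auto intro: DERIV_subset)
    then have "(f has_real_derivative (E' t * exp (- L * t) + E t * (exp (- L * t) * (- L)))) (at t within {0..x})"
      unfolding f_def by (auto intro!: derivative_eq_intros)
    then show ?thesis
      by (simp add: has_field_derivative_def algebra_simps)
  qed
  obtain t where t: "t \<in> {0..x}" and eq: "f x - f 0 = ((E' t - L * E t) * exp (- L * t)) * (x - 0)"
    using mvt_very_simple[OF x(1), of f "\<lambda>t. (*) ((E' t - L * E t) * exp (- L * t))"] df by auto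
  have "E' t - L * E t \<le> 0" using le[of t] t x by auto
  then have "((E' t - L * E t) * exp (- L * t)) * (x - 0) \<le> 0"
    using x by (simp add: mult_nonneg_nonpos mult_nonpos_nonneg)
  then have "E x * exp (- L * x) \<le> E 0" using eq by (simp add: f_def)
  then have "E x * exp (- L * x) * exp (L * x) \<le> E 0 * exp (L * x)" by simp
  then show ?thesis by (simp add: exp_minus field_simps)
qed

lemma norm2_deriv:
  fixes p :: "real \<Rightarrow> complex"
  assumes "(p has_vector_derivative d) (at x within S)"
  shows "((\<lambda>t. (cmod (p t))\<^sup>2) has_real_derivative 2 * (p x \<bullet> d)) (at x within S)"
proof -
  have "(p has_derivative (\<lambda>h. h *\<^sub>R d)) (at x within S)"
    using assms by (simp add: has_vector_derivative_def)
  from has_derivative_inner[OF this this]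
  have "((\<lambda>t. p t \<bullet> p t) has_derivative (\<lambda>h. p x \<bullet> (h *\<^sub>R d) + (h *\<^sub>R d) \<bullet> p x)) (at x within S)" .
  then show ?thesis
    unfolding has_field_derivative_def power2_norm_eq_inner
    by (rule has_derivative_eq_rhs) (auto simp: inner_commute algebra_simps)
qed

lemma vec_bound:
  fixes g :: "real \<Rightarrow> complex"
  assumes x: "0 \<le> x"
    and d: "\<And>t. t \<in> {0..x} \<Longrightarrow> (g has_vector_derivative g' t) (at t within {0..x})"
    and b: "\<And>t. t \<in> {0..x} \<Longrightarrow> norm (g' t) \<le> B"
  shows "norm (g x - g 0) \<le> B * x"
proof -
  have "(g' has_integral (g x - g 0)) {0..x}"
    by (rule fundamental_theorem_of_calculus[OF x]) (use d in auto)
  moreover have "0 \<le> B" using b[of 0] x by (auto intro: order_trans[OF norm_ge_zero])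
  ultimately have "norm (g x - g 0) \<le> B * Henstock_Kurzweil_Integration.content {0..x}"
    using b by (intro has_integral_bound_real[where S="{}"]) auto
  then show ?thesis using x by simp
qed

lemma piece:
  fixes h h1 h2 :: "real \<Rightarrow> complex" and N c d B :: real
  assumes cd: "c \<le> d" and N: "N > 0"
    and dh: "\<And>x. x \<in> {c..d} \<Longrightarrow> (h has_vector_derivative h1 x) (at x within {c..d})"
    and dh1: "\<And>x. x \<in> {c..d} \<Longrightarrow> (h1 has_vector_derivative h2 x) (at x within {c..d})"
    and b: "\<And>x. x \<in> {c..d} \<Longrightarrow> cmod (h2 x) \<le> B"
  shows "\<exists>J. ((\<lambda>x. h x * of_real (cos (N*x))) has_integral
              ((h d * of_real (sin (N*d)/N) + h1 d * of_real (cos (N*d)/N^2))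
              - (h c * of_real (sin (N*c)/N) + h1 c * of_real (cos (N*c)/N^2)) - J)) {c..d}
          \<and> cmod J \<le> B * (d - c) / N^2"
proof -
  define \<Phi> where "\<Phi> x = h x * of_real (sin (N*x)/N) + h1 x * of_real (cos (N*x)/N^2)" for x
  have dP: "(\<Phi> has_vector_derivative (h x * of_real (cos (N*x)) + h2 x * of_real (cos (N*x)/N^2)))
      (at x within {c..d})" if x: "x \<in> {c..d}" for x
  proof -
    have s1: "((\<lambda>x. sin (N*x)/N) has_real_derivative cos (N*x)) (at x within {c..d})"
      using N by (auto intro!: derivative_eq_intros)
    have s2: "((\<lambda>x. cos (N*x)/N^2) has_real_derivative - (sin (N*x)/N)) (at x within {c..d})"
      using N by (auto intro!: derivative_eq_intros simp: power2_eq_square)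
    have "(\<Phi> has_vector_derivative
        (h x * of_real (cos (N*x)) + h1 x * of_real (sin (N*x)/N))
        + (h1 x * of_real (- (sin (N*x)/N)) + h2 x * of_real (cos (N*x)/N^2))) (at x within {c..d})"
      unfolding \<Phi>_def
      by (intro has_vector_derivative_add has_vector_derivative_mult dh dh1 x
          has_vector_derivative_of_real s1 s2)
    then show ?thesis by (rule has_vector_derivative_eq_rhs) (simp add: algebra_simps)
  qed
  have ftc: "((\<lambda>x. h x * of_real (cos (N*x)) + h2 x * of_real (cos (N*x)/N^2)) has_integral (\<Phi> d - \<Phi> c)) {c..d}"
    by (rule fundamental_theorem_of_calculus[OF cd]) (use dP in auto)
  have "continuous_on {c..d} h"
    unfolding continuous_on_eq_continuous_within
    using dh has_vector_derivative_continuous by blast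
  then have "continuous_on {c..d} (\<lambda>x. h x * of_real (cos (N*x)))"
    by (intro continuous_intros) auto
  then have "(\<lambda>x. h x * of_real (cos (N*x))) integrable_on {c..d}"
    by (rule integrable_continuous_real)
  then obtain I where I: "((\<lambda>x. h x * of_real (cos (N*x))) has_integral I) {c..d}"
    by auto
  define J where "J = \<Phi> d - \<Phi> c - I"
  have "((\<lambda>x. (h x * of_real (cos (N*x)) + h2 x * of_real (cos (N*x)/N^2)) - h x * of_real (cos (N*x))) has_integral J) {c..d}"
    unfolding J_def by (rule has_integral_diff[OF ftc I])
  then have hJ: "((\<lambda>x. h2 x * of_real (cos (N*x)/N^2)) has_integral J) {c..d}"
    by simp
  have "cmod J \<le> (B / N^2) * Henstock_Kurzweil_Integration.content {c..d}"
  proof (rule has_integral_bound_real[OF _ _ hJ, where S="{}"])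
    have "0 \<le> B" using b[of c] cd by (auto intro: order_trans[OF norm_ge_zero])
    then show "0 \<le> B / N^2" by simp
    fix x assume x: "x \<in> {c..d} - {}"
    have "cmod (h2 x * of_real (cos (N*x)/N^2)) = cmod (h2 x) * (\<bar>cos (N*x)\<bar> / N^2)"
      by (simp add: norm_mult norm_divide norm_power)
    also have "\<dots> \<le> B * (1 / N^2)"
      using b[of x] x N by (intro mult_mono divide_right_mono) (auto intro: order_trans[OF norm_ge_zero])
    finally show "cmod (h2 x * of_real (cos (N*x)/N^2)) \<le> B / N^2" by simp
  qed auto
  then have "cmod J \<le> B * (d - c) / N^2" using cd by simp
  moreover have "I = \<Phi> d - \<Phi> c - J" unfolding J_def by simp
  ultimately show ?thesis using I unfolding \<Phi>_def by blast
qed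

lemma ibp:
  fixes F F1 F2 :: "real \<Rightarrow> complex" and n :: nat and a A B :: real
  assumes a: "0 < a" "a < pi" and n: "n \<ge> 1"
    and dF: "\<And>x. x \<in> {0..pi} \<Longrightarrow> (F has_vector_derivative F1 x) (at x within {0..pi})"
    and dF1: "\<And>x. x \<in> {0..pi} \<Longrightarrow> (F1 has_vector_derivative F2 x) (at x within {0..pi})"
    and bF: "\<And>x. x \<in> {0..pi} \<Longrightarrow> cmod (F x) \<le> A"
    and bF1: "\<And>x. x \<in> {0..pi} \<Longrightarrow> cmod (F1 x) \<le> A"
    and bF2: "\<And>x. x \<in> {0..pi} \<Longrightarrow> cmod (F2 x) \<le> B"
  shows "cmod (integral {0..pi} (\<lambda>x. F x * of_real (R_api a x) * of_real (cos (real n * x))))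
         \<le> (3 + 2/(pi-a) + pi) * (A + B) / (real n)^2"
proof -
  define N where "N = real n"
  have N: "N > 0" using n by (simp add: N_def)
  define k where "k = 1/(pi-a)"
  have k: "k > 0" using a by (simp add: k_def)
  have A0: "0 \<le> A" using bF[of 0] by (auto intro: order_trans[OF norm_ge_zero])
  have B0: "0 \<le> B" using bF2[of 0] by (auto intro: order_trans[OF norm_ge_zero])
  have sub1: "{0..a} \<subseteq> {0..pi}" and sub2: "{a..pi} \<subseteq> {0..pi}" using a by auto
  obtain J1 where J1: "((\<lambda>x. F x * of_real (cos (N*x))) has_integral
              ((F a * of_real (sin (N*a)/N) + F1 a * of_real (cos (N*a)/N^2))
              - (F 0 * of_real (sin (N*0)/N) + F1 0 * of_real (cos (N*0)/N^2)) - J1)) {0..a}"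
      and J1b: "cmod J1 \<le> B * (a - 0) / N^2"
  proof -
    have "\<And>x. x \<in> {0..a} \<Longrightarrow> (F has_vector_derivative F1 x) (at x within {0..a})"
      using dF sub1 has_vector_derivative_within_subset by blast
    moreover have "\<And>x. x \<in> {0..a} \<Longrightarrow> (F1 has_vector_derivative F2 x) (at x within {0..a})"
      using dF1 sub1 has_vector_derivative_within_subset by blast
    moreover have "\<And>x. x \<in> {0..a} \<Longrightarrow> cmod (F2 x) \<le> B" using bF2 sub1 by blast
    ultimately show ?thesis using piece[of 0 a N F F1 F2 B] a N that by auto
  qed
  define r where "r x = k * (pi - x)" for x
  define h where "h x = F x * of_real (r x)" for x
  define h1 where "h1 x = F1 x * of_real (r x) + F x * of_real (-k)" for x
  define h2 where "h2 x = F2 x * of_real (r x) + F1 x * of_real (-k) + F1 x * of_real (-k)" for x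
  have dr: "(r has_real_derivative -k) (at x within {a..pi})" for x
    unfolding r_def by (auto intro!: derivative_eq_intros)
  have dh: "(h has_vector_derivative h1 x) (at x within {a..pi})" if x: "x \<in> {a..pi}" for x
  proof -
    have "(h has_vector_derivative F x * of_real (-k) + F1 x * of_real (r x)) (at x within {a..pi})"
      unfolding h_def
      by (intro has_vector_derivative_mult has_vector_derivative_of_real dr
          has_vector_derivative_within_subset[OF dF sub2]) (use x sub2 in auto)
    then show ?thesis by (rule has_vector_derivative_eq_rhs) (simp add: h1_def algebra_simps)
  qed
  have dh1: "(h1 has_vector_derivative h2 x) (at x within {a..pi})" if x: "x \<in> {a..pi}" for x
  proof -
    have "(h1 has_vector_derivative (F1 x * of_real (-k) + F2 x * of_real (r x)) + (F1 x * of_real (-k)))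
       (at x within {a..pi})"
      unfolding h1_def
      by (intro has_vector_derivative_add has_vector_derivative_mult has_vector_derivative_of_real dr
          has_vector_derivative_mult_left
          has_vector_derivative_within_subset[OF dF sub2]
          has_vector_derivative_within_subset[OF dF1 sub2]) (use x sub2 in auto)
    then show ?thesis by (rule has_vector_derivative_eq_rhs) (simp add: h2_def algebra_simps)
  qed
  have bh2: "cmod (h2 x) \<le> B + 2*k*A" if x: "x \<in> {a..pi}" for x
  proof -
    have r01: "0 \<le> r x" "r x \<le> 1" using x a by (auto simp: r_def k_def field_simps)
    have "cmod (h2 x) \<le> cmod (F2 x) * r x + cmod (F1 x) * k + cmod (F1 x) * k"
    proof -
      have "cmod (h2 x) \<le> cmod (F2 x * of_real (r x) + F1 x * of_real (-k)) + cmod (F1 x * of_real (-k))"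
        unfolding h2_def by (rule norm_triangle_ineq)
      also have "\<dots> \<le> cmod (F2 x * of_real (r x)) + cmod (F1 x * of_real (-k)) + cmod (F1 x * of_real (-k))"
        by (intro add_mono norm_triangle_ineq) auto
      finally show ?thesis using r01 k by (simp add: norm_mult)
    qed
    also have "\<dots> \<le> B * 1 + A * k + A * k"
      using x sub2 r01 k bF1 bF2 A0 B0 by (intro add_mono mult_mono) auto
    finally show ?thesis by (simp add: algebra_simps)
  qed
  obtain J2 where J2: "((\<lambda>x. h x * of_real (cos (N*x))) has_integral
              ((h pi * of_real (sin (N*pi)/N) + h1 pi * of_real (cos (N*pi)/N^2))
              - (h a * of_real (sin (N*a)/N) + h1 a * of_real (cos (N*a)/N^2)) - J2)) {a..pi}"
      and J2b: "cmod J2 \<le> (B + 2*k*A) * (pi - a) / N^2"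
    using piece[of a pi N h h1 h2 "B + 2*k*A"] a N dh dh1 bh2 by auto
  define f where "f x = F x * of_real (R_api a x) * of_real (cos (real n * x))" for x
  have f1: "(f has_integral
              ((F a * of_real (sin (N*a)/N) + F1 a * of_real (cos (N*a)/N^2))
              - (F 0 * of_real (sin (N*0)/N) + F1 0 * of_real (cos (N*0)/N^2)) - J1)) {0..a}"
    by (rule has_integral_eq[OF _ J1]) (auto simp: f_def R_api_def N_def)
  have f2: "(f has_integral
              ((h pi * of_real (sin (N*pi)/N) + h1 pi * of_real (cos (N*pi)/N^2))
              - (h a * of_real (sin (N*a)/N) + h1 a * of_real (cos (N*a)/N^2)) - J2)) {a..pi}"
  proof (rule has_integral_eq[OF _ J2])
    fix x assume x: "x \<in> {a..pi}"
    then have "R_api a x = r x" using a by (auto simp: R_api_def r_def k_def)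
    then show "h x * of_real (cos (N*x)) = f x" by (simp add: f_def h_def N_def)
  qed
  have ra: "r a = 1" "r pi = 0" using a by (auto simp: r_def k_def)
  have snpi: "sin (N*pi) = 0" by (simp add: N_def sin_npi)
  have Ieq: "integral {0..pi} f =
     F a * of_real k * of_real (cos (N*a)/N^2) - F1 0 * of_real (1/N^2)
     - F pi * of_real k * of_real (cos (N*pi)/N^2) - J1 - J2"
  proof -
    have Nc: "complex_of_real N \<noteq> 0" using N by simp
    have "integral {0..pi} f = ((F a * of_real (sin (N*a)/N) + F1 a * of_real (cos (N*a)/N^2))
              - (F 0 * of_real (sin (N*0)/N) + F1 0 * of_real (cos (N*0)/N^2)) - J1) +
             ((h pi * of_real (sin (N*pi)/N) + h1 pi * of_real (cos (N*pi)/N^2))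
              - (h a * of_real (sin (N*a)/N) + h1 a * of_real (cos (N*a)/N^2)) - J2)"
      by (rule integral_unique[OF has_integral_combine[OF less_imp_le[OF a(1)] less_imp_le[OF a(2)] f1 f2]])
    then show ?thesis using Nc by (simp add: h_def h1_def ra snpi) (simp add: field_simps)
  qed
  have num: "A * k + A + A * k + B * a + (B + 2*k*A) * (pi - a) = A * (3 + 2*k) + B * pi"
  proof -
    have kp: "k * (pi - a) = 1" using a by (simp add: k_def)
    have "(B + 2*k*A) * (pi - a) = B * (pi - a) + 2 * A * (k * (pi - a))" by (simp add: algebra_simps)
    then have e: "(B + 2*k*A) * (pi - a) = B * (pi - a) + 2 * A" using kp by simp
    show ?thesis unfolding e by (simp add: algebra_simps)
  qed
  from Ieq have "cmod (integral {0..pi} f) \<le> cmod (F a) * k * (\<bar>cos (N*a)\<bar>/N^2) + cmod (F1 0) * (1/N^2)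
     + cmod (F pi) * k * (\<bar>cos (N*pi)\<bar>/N^2) + cmod J1 + cmod J2"
    using k
    by (auto simp: norm_mult norm_divide norm_power intro!: order_trans[OF norm_triangle_ineq4] add_mono
        order_trans[OF norm_triangle_ineq] )
  also have "\<dots> \<le> A * k * (1/N^2) + A * (1/N^2) + A * k * (1/N^2) + B * a / N^2 + (B + 2*k*A) * (pi - a) / N^2"
    using J1b J2b bF[of a] bF[of pi] bF1[of 0] a k N A0
    by (intro add_mono mult_mono divide_right_mono) auto
  also have "\<dots> = (A * k + A + A * k + B * a + (B + 2*k*A) * (pi - a)) / N^2"
    using N by (simp add: field_simps)
  also have "\<dots> = (A * (3 + 2*k) + B * pi) / N^2" using num by simp
  also have "\<dots> \<le> (3 + 2/(pi-a) + pi) * (A + B) / N^2"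
  proof -
    have "A * (3 + 2*k) + B * pi \<le> (3 + 2*k + pi) * (A + B)"
      using A0 B0 k by (simp add: algebra_simps)
    then show ?thesis by (intro divide_right_mono) (auto simp: k_def)
  qed
  finally show ?thesis by (simp add: f_def[abs_def] N_def)
qed

lemma inner_cmul: "(p::complex) \<bullet> (c * p) = Re c * (cmod p)\<^sup>2"
  by (simp add: inner_complex_def cmod_power2) (simp add: power2_eq_square algebra_simps)

lemma inner_le: "(p::complex) \<bullet> q \<le> cmod p * cmod q"
  by (metis Cauchy_Schwarz_ineq2 abs_le_D1)

lemma sq_sum_le: "((a::real) + b)^2 \<le> 2 * (a^2 + b^2)"
proof -
  have "0 \<le> (a - b)^2" by simp
  then show ?thesis by (simp add: power2_eq_square algebra_simps)
qed

lemma xi_large: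
  fixes y y' :: "real \<Rightarrow> complex" and V :: "real \<Rightarrow> real"
  assumes y0: "y 0 = 1" and y'0: "y' 0 = 0"
    and dy: "\<And>x. x \<in> {0..pi} \<Longrightarrow> (y has_vector_derivative y' x) (at x within {0..pi})"
    and dy': "\<And>x. x \<in> {0..pi} \<Longrightarrow> (y' has_vector_derivative (of_real (V x) - z) * y x) (at x within {0..pi})"
    and bV: "\<And>x. x \<in> {0..pi} \<Longrightarrow> \<bar>V x\<bar> \<le> M"
    and sz: "s^2 = z" and s1: "cmod s \<ge> 1"
    and x: "x \<in> {0..pi}"
  shows "cmod (y x) \<le> exp (M * pi) * exp (\<bar>Im s\<bar> * x)"
proof -
  define \<tau> where "\<tau> = \<bar>Im s\<bar>"
  define p where "p t = y' t + \<i> * s * y t" for t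
  define q where "q t = y' t - \<i> * s * y t" for t
  define E where "E t = (cmod (p t))\<^sup>2 + (cmod (q t))\<^sup>2" for t
  have M0: "0 \<le> M" using bV[of 0] by auto
  have dp: "(p has_vector_derivative (\<i> * s) * p t + of_real (V t) * y t) (at t within {0..pi})"
    if t: "t \<in> {0..pi}" for t
  proof -
    have "(p has_vector_derivative (of_real (V t) - z) * y t + \<i> * s * y' t) (at t within {0..pi})"
      unfolding p_def by (intro has_vector_derivative_add has_vector_derivative_mult_right dy dy' t)
    then show ?thesis
      by (rule has_vector_derivative_eq_rhs) (simp add: p_def sz[symmetric] algebra_simps power2_eq_square)
  qed
  have dq: "(q has_vector_derivative (- \<i> * s) * q t + of_real (V t) * y t) (at t within {0..pi})"
    if t: "t \<in> {0..pi}" for t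
  proof -
    have "(q has_vector_derivative (of_real (V t) - z) * y t - \<i> * s * y' t) (at t within {0..pi})"
      unfolding q_def by (intro has_vector_derivative_diff has_vector_derivative_mult_right dy dy' t)
    then show ?thesis
      by (rule has_vector_derivative_eq_rhs) (simp add: q_def sz[symmetric] algebra_simps power2_eq_square)
  qed
  define E' where "E' t = 2 * (p t \<bullet> ((\<i> * s) * p t + of_real (V t) * y t))
      + 2 * (q t \<bullet> ((- \<i> * s) * q t + of_real (V t) * y t))" for t
  have dE: "(E has_real_derivative E' t) (at t within {0..pi})" if t: "t \<in> {0..pi}" for t
    unfolding E_def E'_def
    by (intro DERIV_add norm2_deriv dp dq t)
  have ybounds: "2 * cmod s * cmod (y t) \<le> cmod (p t) + cmod (q t)" for t
  proof -
    have "2 * \<i> * s * y t = p t - q t" by (simp add: p_def q_def algebra_simps)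
    then have "cmod (2 * \<i> * s * y t) \<le> cmod (p t) + cmod (q t)"
      by (metis norm_triangle_ineq4)
    moreover have "cmod (2 * \<i> * s * y t) = 2 * cmod s * cmod (y t)" by (simp add: norm_mult)
    ultimately show ?thesis by linarith
  qed
  have ybound: "2 * cmod (y t) \<le> cmod (p t) + cmod (q t)" for t
  proof -
    have "2 * \<i> * s * y t = p t - q t" by (simp add: p_def q_def algebra_simps)
    then have "cmod (2 * \<i> * s * y t) \<le> cmod (p t) + cmod (q t)"
      by (metis norm_triangle_ineq4)
    moreover have "cmod (2 * \<i> * s * y t) = 2 * cmod s * cmod (y t)" by (simp add: norm_mult)
    moreover have "2 * cmod (y t) \<le> 2 * cmod s * cmod (y t)" using s1
      by (simp add: mult_right_mono)
    ultimately show ?thesis by linarith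
  qed
  have E'le: "E' t \<le> (2 * \<tau> + 2 * M) * E t" if t: "t \<in> {0..pi}" for t
  proof -
    have e1: "p t \<bullet> ((\<i> * s) * p t + of_real (V t) * y t) \<le> \<tau> * (cmod (p t))\<^sup>2 + cmod (p t) * (M * cmod (y t))"
    proof -
      have "p t \<bullet> ((\<i> * s) * p t + of_real (V t) * y t) = - Im s * (cmod (p t))\<^sup>2 + p t \<bullet> (of_real (V t) * y t)"
        by (simp add: inner_add_right inner_diff_right inner_cmul)
      also have "\<dots> \<le> \<tau> * (cmod (p t))\<^sup>2 + cmod (p t) * cmod (of_real (V t) * y t)"
        by (intro add_mono inner_le mult_right_mono) (auto simp: \<tau>_def)
      also have "cmod (of_real (V t) * y t) \<le> M * cmod (y t)"
        using bV[OF t] by (simp add: norm_mult mult_right_mono)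
      finally show ?thesis by (simp add: mult_left_mono)
    qed
    have e2: "q t \<bullet> ((- \<i> * s) * q t + of_real (V t) * y t) \<le> \<tau> * (cmod (q t))\<^sup>2 + cmod (q t) * (M * cmod (y t))"
    proof -
      have "q t \<bullet> ((- \<i> * s) * q t + of_real (V t) * y t) = Im s * (cmod (q t))\<^sup>2 + q t \<bullet> (of_real (V t) * y t)"
        by (simp add: inner_add_right inner_diff_right inner_cmul)
      also have "\<dots> \<le> \<tau> * (cmod (q t))\<^sup>2 + cmod (q t) * cmod (of_real (V t) * y t)"
        by (intro add_mono inner_le mult_right_mono) (auto simp: \<tau>_def)
      also have "cmod (of_real (V t) * y t) \<le> M * cmod (y t)"
        using bV[OF t] by (simp add: norm_mult mult_right_mono)
      finally show ?thesis by (simp add: mult_left_mono)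
    qed
    have "E' t \<le> 2 * \<tau> * E t + M * (2 * cmod (y t)) * (cmod (p t) + cmod (q t))"
      using e1 e2 by (simp add: E'_def E_def algebra_simps)
    also have "M * (2 * cmod (y t)) * (cmod (p t) + cmod (q t)) \<le> M * (cmod (p t) + cmod (q t)) * (cmod (p t) + cmod (q t))"
      using ybound[of t] M0 by (intro mult_right_mono mult_left_mono) auto
    also have "\<dots> \<le> 2 * M * E t"
    proof -
      have "(cmod (p t) + cmod (q t)) * (cmod (p t) + cmod (q t)) \<le> 2 * E t"
        unfolding E_def using sq_sum_le[of "cmod (p t)" "cmod (q t)"] by (simp add: power2_eq_square)
      then have "M * ((cmod (p t) + cmod (q t)) * (cmod (p t) + cmod (q t))) \<le> M * (2 * E t)"
        using M0 by (rule mult_left_mono)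
      then show ?thesis by (simp add: algebra_simps)
    qed
    finally show ?thesis by (simp add: algebra_simps)
  qed
  have Ex: "E x \<le> E 0 * exp ((2 * \<tau> + 2 * M) * x)"
    by (rule gronwall_deriv[of pi E E']) (use dE E'le x in auto)
  have E0: "E 0 = 2 * (cmod s)\<^sup>2"
    by (simp add: E_def p_def q_def y0 y'0 norm_mult)
  have "4 * (cmod s)\<^sup>2 * (cmod (y x))\<^sup>2 \<le> 2 * E x"
  proof -
    have "(2 * cmod s * cmod (y x))\<^sup>2 \<le> (cmod (p x) + cmod (q x))\<^sup>2"
      using ybounds[of x] by (intro power_mono) auto
    also have "\<dots> \<le> 2 * E x" unfolding E_def by (rule sq_sum_le)
    finally show ?thesis by (simp add: power2_eq_square)
  qed
  also have "\<dots> \<le> 4 * (cmod s)\<^sup>2 * exp ((2 * \<tau> + 2 * M) * x)"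
    using Ex E0 by simp
  also have "\<dots> \<le> 4 * (cmod s)\<^sup>2 * (exp ((\<tau> + M) * x))\<^sup>2"
    by (simp add: exp_double[symmetric] algebra_simps)
  finally have "(cmod s)\<^sup>2 * (cmod (y x))\<^sup>2 \<le> (cmod s)\<^sup>2 * (exp ((\<tau> + M) * x))\<^sup>2" by simp
  moreover have "(cmod s)\<^sup>2 > 0" using s1 by (auto simp: zero_less_power2)
  ultimately have "(cmod (y x))\<^sup>2 \<le> (exp ((\<tau> + M) * x))\<^sup>2"
    by (simp add: mult_le_cancel_left_pos)
  then have "cmod (y x) \<le> exp ((\<tau> + M) * x)"
    by (rule power2_le_imp_le) simp
  also have "\<dots> = exp (M * x) * exp (\<tau> * x)" by (simp add: exp_add[symmetric] algebra_simps)
  also have "\<dots> \<le> exp (M * pi) * exp (\<tau> * x)" using x M0 by (auto intro!: mult_right_mono mult_left_mono)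
  finally show ?thesis by (simp add: \<tau>_def)
qed

lemma xi_small:
  fixes y y' :: "real \<Rightarrow> complex" and V :: "real \<Rightarrow> real"
  assumes y0: "y 0 = 1" and y'0: "y' 0 = 0"
    and dy: "\<And>x. x \<in> {0..pi} \<Longrightarrow> (y has_vector_derivative y' x) (at x within {0..pi})"
    and dy': "\<And>x. x \<in> {0..pi} \<Longrightarrow> (y' has_vector_derivative (of_real (V x) - z) * y x) (at x within {0..pi})"
    and bV: "\<And>x. x \<in> {0..pi} \<Longrightarrow> \<bar>V x\<bar> \<le> M"
    and z1: "cmod z \<le> 1"
    and x: "x \<in> {0..pi}"
  shows "cmod (y x) \<le> exp ((M + 2) * pi / 2) \<and> cmod (y' x) \<le> exp ((M + 2) * pi / 2)"
proof -
  define E where "E t = (cmod (y' t))\<^sup>2 + (cmod (y t))\<^sup>2" for t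
  define E' where "E' t = 2 * (y' t \<bullet> ((of_real (V t) - z) * y t)) + 2 * (y t \<bullet> y' t)" for t
  have M0: "0 \<le> M" using bV[of 0] by auto
  have dE: "(E has_real_derivative E' t) (at t within {0..pi})" if t: "t \<in> {0..pi}" for t
    unfolding E_def E'_def by (intro DERIV_add norm2_deriv dy dy' t)
  have E'le: "E' t \<le> (M + 2) * E t" if t: "t \<in> {0..pi}" for t
  proof -
    have "cmod ((of_real (V t) - z) * y t) \<le> (M + 1) * cmod (y t)"
    proof -
      have "cmod (of_real (V t) - z) \<le> M + 1"
        using bV[OF t] z1 by (smt (verit) norm_of_real norm_triangle_ineq4)
      then show ?thesis by (simp add: norm_mult mult_right_mono)
    qed
    then have "y' t \<bullet> ((of_real (V t) - z) * y t) \<le> cmod (y' t) * ((M + 1) * cmod (y t))"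
      by (meson inner_le mult_left_mono norm_ge_zero order_trans)
    moreover have "y t \<bullet> y' t \<le> cmod (y t) * cmod (y' t)" by (rule inner_le)
    ultimately have "E' t \<le> (M + 2) * (2 * cmod (y t) * cmod (y' t))"
      unfolding E'_def by (simp add: algebra_simps)
    also have "\<dots> \<le> (M + 2) * E t"
    proof -
      have "2 * cmod (y t) * cmod (y' t) \<le> E t"
        unfolding E_def using sum_squares_bound[of "cmod (y t)" "cmod (y' t)"] by simp
      then show ?thesis using M0 by (intro mult_left_mono) auto
    qed
    finally show ?thesis .
  qed
  have Ex: "E x \<le> E 0 * exp ((M + 2) * x)"
    by (rule gronwall_deriv[of pi E E']) (use dE E'le x in auto)
  have E0: "E 0 = 1" by (simp add: E_def y0 y'0)
  have "exp ((M + 2) * x) \<le> exp ((M + 2) * pi)" using x M0 by (auto intro: mult_left_mono)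
  then have "E x \<le> exp ((M + 2) * pi)" using Ex E0 by (metis mult_1 order_trans)
  also have "\<dots> = (exp ((M + 2) * pi / 2))\<^sup>2" by (simp add: exp_double[symmetric])
  finally have Eb: "E x \<le> (exp ((M + 2) * pi / 2))\<^sup>2" .
  have "(cmod (y x))\<^sup>2 \<le> (exp ((M + 2) * pi / 2))\<^sup>2"
    using Eb zero_le_power2[of "cmod (y' x)"] unfolding E_def by linarith
  then have 1: "cmod (y x) \<le> exp ((M + 2) * pi / 2)" by (rule power2_le_imp_le) simp
  have "(cmod (y' x))\<^sup>2 \<le> (exp ((M + 2) * pi / 2))\<^sup>2"
    using Eb zero_le_power2[of "cmod (y x)"] unfolding E_def by linarith
  then have 2: "cmod (y' x) \<le> exp ((M + 2) * pi / 2)" by (rule power2_le_imp_le) simp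
  show ?thesis using 1 2 by simp
qed

lemma P_bound:
  fixes y y' :: "real \<Rightarrow> complex" and V :: "real \<Rightarrow> real"
  assumes y0: "y 0 = 1" and y'0: "y' 0 = 0"
    and dy: "\<And>x. x \<in> {0..pi} \<Longrightarrow> (y has_vector_derivative y' x) (at x within {0..pi})"
    and dy': "\<And>x. x \<in> {0..pi} \<Longrightarrow> (y' has_vector_derivative (of_real (V x) - z) * y x) (at x within {0..pi})"
    and bV: "\<And>x. x \<in> {0..pi} \<Longrightarrow> \<bar>V x\<bar> \<le> M"
    and sz: "s^2 = z" and K: "0 \<le> K"
    and yb: "\<And>t. t \<in> {0..pi} \<Longrightarrow> cmod (y t) \<le> K * exp (\<bar>Im s\<bar> * t)"
    and x: "x \<in> {0..pi}"
  shows "cmod (y' x + \<i> * s * y x - \<i> * s * exp (\<i> * s * of_real x)) \<le> M * K * pi * exp (\<bar>Im s\<bar> * x)"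
proof -
  define \<tau> where "\<tau> = \<bar>Im s\<bar>"
  have M0: "0 \<le> M" using bV[of 0] by auto
  define p where "p t = y' t + \<i> * s * y t" for t
  define e where "e t = exp (- (\<i> * s) * of_real t)" for t
  define g where "g t = p t * e t" for t
  have sub: "{0..x} \<subseteq> {0..pi}" using x by auto
  have dp: "(p has_vector_derivative (\<i> * s) * p t + of_real (V t) * y t) (at t within {0..pi})"
    if t: "t \<in> {0..pi}" for t
  proof -
    have "(p has_vector_derivative (of_real (V t) - z) * y t + \<i> * s * y' t) (at t within {0..pi})"
      unfolding p_def by (intro has_vector_derivative_add has_vector_derivative_mult_right dy dy' t)
    then show ?thesis
      by (rule has_vector_derivative_eq_rhs) (simp add: p_def sz[symmetric] algebra_simps power2_eq_square)
  qed
  have de: "(e has_vector_derivative (- (\<i> * s)) * e t) (at t within S)" for t S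
  proof -
    have "((\<lambda>w. exp (- (\<i> * s) * w)) has_field_derivative exp (- (\<i> * s) * of_real t) * (- (\<i> * s))) (at (of_real t))"
      by (auto intro!: derivative_eq_intros)
    from has_vector_derivative_real_field[OF this]
    show ?thesis unfolding e_def by (simp add: mult.commute)
  qed
  have dg: "(g has_vector_derivative of_real (V t) * y t * e t) (at t within {0..x})"
    if t: "t \<in> {0..x}" for t
  proof -
    have "(g has_vector_derivative p t * ((- (\<i> * s)) * e t) + ((\<i> * s) * p t + of_real (V t) * y t) * e t) (at t within {0..x})"
      unfolding g_def
      by (intro has_vector_derivative_mult de has_vector_derivative_within_subset[OF dp sub]) (use t sub in auto)
    then show ?thesis by (rule has_vector_derivative_eq_rhs) (simp add: algebra_simps)
  qed
  have ne: "cmod (e t) = exp (Im s * t)" for t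
    by (simp add: e_def norm_exp_eq_Re)
  have bg: "cmod (of_real (V t) * y t * e t) \<le> M * K * exp ((\<tau> + Im s) * x)" if t: "t \<in> {0..x}" for t
  proof -
    have tp: "t \<in> {0..pi}" using t sub by auto
    have "cmod (of_real (V t) * y t * e t) = \<bar>V t\<bar> * cmod (y t) * exp (Im s * t)"
      by (simp add: norm_mult ne)
    also have "\<dots> \<le> M * (K * exp (\<tau> * t)) * exp (Im s * t)"
      using bV[OF tp] yb[OF tp] M0 by (intro mult_right_mono mult_mono) (auto simp: \<tau>_def)
    also have "\<dots> = M * K * exp ((\<tau> + Im s) * t)" by (simp add: algebra_simps exp_add)
    also have "\<dots> \<le> M * K * exp ((\<tau> + Im s) * x)"
    proof -
      have "0 \<le> \<tau> + Im s" by (simp add: \<tau>_def)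
      then have "(\<tau> + Im s) * t \<le> (\<tau> + Im s) * x" using t by (intro mult_left_mono) auto
      then show ?thesis using M0 K by (intro mult_left_mono) (auto simp: mult_nonneg_nonneg)
    qed
    finally show ?thesis .
  qed
  have x0: "0 \<le> x" using x by auto
  have gb: "cmod (g x - g 0) \<le> M * K * exp ((\<tau> + Im s) * x) * x"
    by (rule vec_bound[OF x0 dg bg])
  have g0: "g 0 = \<i> * s" by (simp add: g_def p_def e_def y0 y'0)
  have eq: "y' x + \<i> * s * y x - \<i> * s * exp (\<i> * s * of_real x) = (g x - g 0) * exp (\<i> * s * of_real x)"
  proof -
    have ee: "e x * exp (\<i> * s * of_real x) = 1" by (simp add: e_def exp_add[symmetric])
    have "g x * exp (\<i> * s * of_real x) = p x * (e x * exp (\<i> * s * of_real x))"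
      by (simp add: g_def mult.assoc)
    then have "g x * exp (\<i> * s * of_real x) = p x" using ee by simp
    then show ?thesis unfolding g0 by (simp add: p_def algebra_simps)
  qed
  have "cmod (y' x + \<i> * s * y x - \<i> * s * exp (\<i> * s * of_real x))
      = cmod (g x - g 0) * exp (- Im s * x)"
    unfolding eq by (simp add: norm_mult norm_exp_eq_Re)
  also have "\<dots> \<le> M * K * exp ((\<tau> + Im s) * x) * x * exp (- Im s * x)"
    using gb by (intro mult_right_mono) auto
  also have "\<dots> = M * K * x * exp (\<tau> * x)"
    by (simp add: algebra_simps exp_add[symmetric])
  also have "\<dots> \<le> M * K * pi * exp (\<tau> * x)"
    using x M0 K by (intro mult_right_mono mult_left_mono) (auto simp: mult_nonneg_nonneg)
  finally show ?thesis by (simp add: \<tau>_def)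
qed

lemma ac_bounded:
  assumes "abs_continuous_on 0 pi V"
  shows "\<exists>M\<ge>0. \<forall>x\<in>{0..pi}. \<bar>V x\<bar> \<le> M"
proof -
  have "continuous_on {0..pi} V"
    unfolding continuous_on_iff
  proof (intro ballI allI impI)
    fix x e :: real assume x: "x \<in> {0..pi}" and e: "0 < e"
    obtain d where d: "d > 0" and H: "\<forall>(n::nat) u v. (\<forall>i<n. 0 \<le> u i \<and> u i \<le> v i \<and> v i \<le> pi) \<and>
        (\<forall>i<n. \<forall>j<n. i \<noteq> j \<longrightarrow> v i \<le> u j \<or> v j \<le> u i) \<and> (\<Sum>i<n. v i - u i) < d
        \<longrightarrow> (\<Sum>i<n. \<bar>V (v i) - V (u i)\<bar>) < e"
      using assms e unfolding abs_continuous_on_def by blast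
    show "\<exists>d>0. \<forall>x'\<in>{0..pi}. dist x' x < d \<longrightarrow> dist (V x') (V x) < e"
    proof (intro exI[of _ d] conjI ballI impI d)
      fix x' assume x': "x' \<in> {0..pi}" and dx: "dist x' x < d"
      have "(\<Sum>i<(1::nat). \<bar>V ((\<lambda>_. max x x') i) - V ((\<lambda>_. min x x') i)\<bar>) < e"
        by (rule H[rule_format]) (use x x' dx in \<open>auto simp: dist_real_def\<close>)
      then show "dist (V x') (V x) < e"
        by (auto simp: dist_real_def max_def min_def abs_minus_commute split: if_splits)
    qed
  qed
  then have "compact (V ` {0..pi})" by (intro compact_continuous_image) auto
  then obtain M where "\<forall>y\<in>V ` {0..pi}. norm y \<le> M"
    using compact_imp_bounded bounded_iff by metis
  then show ?thesis by (intro exI[of _ "max M 0"]) auto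
qed

lemma G_bound:
  fixes t :: real assumes t: "0 \<le> t"
  shows "1 + t \<le> 2 * pi * (1 + (1 + t^2) / (1 + pi * t))"
proof (cases "t \<le> 1")
  case True
  have "0 \<le> (1 + t^2) / (1 + pi * t)" using t by (simp add: pi_ge_zero)
  moreover have "2 \<le> 2 * pi" using pi_gt3 by simp
  ultimately have "2 * pi * 1 \<le> 2 * pi * (1 + (1 + t^2) / (1 + pi * t))"
    by (intro mult_left_mono) auto
  then have "2 \<le> 2 * pi * (1 + (1 + t^2) / (1 + pi * t))" using pi_gt3 by linarith
  then show ?thesis using True by simp
next
  case False
  then have t1: "t > 1" by simp
  have "t / (2 * pi) \<le> (1 + t^2) / (1 + pi * t)"
  proof -
    have "t * (1 + pi * t) \<le> (1 + t^2) * (2 * pi)"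
    proof -
      have "1 * 1 \<le> pi * t" using t1 pi_gt3 by (intro mult_mono) auto
      then have "t * (1 + pi * t) \<le> t * (2 * pi * t)" using t1 by (intro mult_left_mono) auto
      also have "\<dots> \<le> (1 + t^2) * (2 * pi)" by (simp add: power2_eq_square algebra_simps pi_ge_zero)
      finally show ?thesis .
    qed
    moreover have p1: "0 < 1 + pi * t" using t1 pi_gt3 by (simp add: add_pos_pos)
    moreover have p2: "0 < 2 * pi" by simp
    ultimately show ?thesis by (simp add: divide_simps)
  qed
  then have "2 * pi * (t / (2 * pi)) \<le> 2 * pi * ((1 + t^2) / (1 + pi * t))"
    by (intro mult_left_mono) (auto simp: pi_ge_zero)
  then have "t \<le> 2 * pi * ((1 + t^2) / (1 + pi * t))" by simp
  moreover have "1 \<le> 2 * pi" using pi_gt3 by simp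
  ultimately show ?thesis by (simp add: algebra_simps)
qed

theorem lemmaA6:
  fixes V :: "real \<Rightarrow> real" and a :: real
    and xi :: "real \<Rightarrow> complex \<Rightarrow> complex" and dxi :: "real \<Rightarrow> complex \<Rightarrow> complex"
  assumes "abs_continuous_on 0 pi V"
    and "0 < a" and "a < pi"
    and "\<And>z. is_xi_solution V z (\<lambda>x. xi x z) (\<lambda>x. dxi x z)"
  shows "\<exists>C>0. \<forall>(z::complex) (n::nat). n \<ge> 1 \<longrightarrow>
           cmod (integral {0..pi} (\<lambda>x. (xi x z - cos (csqrt z * complex_of_real x))
                    * complex_of_real (R_api a x) * complex_of_real (cos (real n * x))))
           \<le> C * exp (pi * \<bar>Im (csqrt z)\<bar>) / (real n)\<^sup>2
               * (1 + (1 + cmod z) / (1 + pi * sqrt (cmod z)))"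
proof -
  obtain M where M0: "M \<ge> 0" and bV: "\<And>x. x \<in> {0..pi} \<Longrightarrow> \<bar>V x\<bar> \<le> M"
    using ac_bounded[OF assms(1)] by blast
  define K where "K = exp (M * pi)"
  define K1 where "K1 = exp ((M + 2) * pi / 2)"
  define A0 where "A0 = M * K * pi + K1 + exp pi"
  define B0 where "B0 = M * K + M * K * pi + M * K1 + K1 + exp pi"
  define W where "W = 3 + 2/(pi-a) + pi"
  have K0: "K \<ge> 0" "K1 \<ge> 0" by (auto simp: K_def K1_def)
  have A00: "A0 \<ge> 0" and B00: "B0 \<ge> 0" using M0 K0 by (auto simp: A0_def B0_def)
  have W0: "W > 0" using assms(2,3) by (simp add: W_def add_pos_pos)
  define C where "C = W * (A0 + B0) * (2 * pi) + 1"
  have "0 \<le> W * (A0 + B0) * (2 * pi)" using W0 A00 B00 by (intro mult_nonneg_nonneg) auto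
  then have C0: "C > 0" unfolding C_def by linarith
  show ?thesis
  proof (intro exI[of _ C] conjI allI impI C0)
    fix z :: complex and n :: nat assume n: "n \<ge> 1"
    define s where "s = csqrt z"
    have sz: "s^2 = z" by (simp add: s_def)
    define \<tau> where "\<tau> = \<bar>Im s\<bar>"
    define e where "e = exp (\<tau> * pi)"
    have e1: "1 \<le> e" by (simp add: e_def \<tau>_def)
    define y where "y x = xi x z" for x
    define y' where "y' x = dxi x z" for x
    have y0: "y 0 = 1" and y'0: "y' 0 = 0"
      and dy: "\<And>x. x \<in> {0..pi} \<Longrightarrow> (y has_vector_derivative y' x) (at x within {0..pi})"
      and dy': "\<And>x. x \<in> {0..pi} \<Longrightarrow> (y' has_vector_derivative (of_real (V x) - z) * y x) (at x within {0..pi})"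
      using assms(4)[of z] by (auto simp: is_xi_solution_def y_def[abs_def] y'_def[abs_def])
    define F where "F x = y x - cos (s * of_real x)" for x
    define F1 where "F1 x = y' x + s * sin (s * of_real x)" for x
    define F2 where "F2 x = of_real (V x) * y x - z * F x" for x
    have dF: "(F has_vector_derivative F1 x) (at x within {0..pi})" if x: "x \<in> {0..pi}" for x
    proof -
      have "((\<lambda>w. cos (s * w)) has_field_derivative - sin (s * of_real x) * s) (at (of_real x))"
        by (auto intro!: derivative_eq_intros)
      from has_vector_derivative_real_field[OF this]
      have "((\<lambda>x. cos (s * of_real x)) has_vector_derivative - sin (s * of_real x) * s) (at x within {0..pi})" .
      from has_vector_derivative_diff[OF dy[OF x] this]
      show ?thesis unfolding F_def[abs_def] F1_def by (simp add: algebra_simps)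
    qed
    have dF1: "(F1 has_vector_derivative F2 x) (at x within {0..pi})" if x: "x \<in> {0..pi}" for x
    proof -
      have "((\<lambda>w. s * sin (s * w)) has_field_derivative s * (cos (s * of_real x) * s)) (at (of_real x))"
        by (auto intro!: derivative_eq_intros)
      from has_vector_derivative_real_field[OF this]
      have "((\<lambda>x. s * sin (s * of_real x)) has_vector_derivative s * (cos (s * of_real x) * s)) (at x within {0..pi})" .
      from has_vector_derivative_add[OF dy'[OF x] this]
      show ?thesis unfolding F1_def[abs_def] F2_def F_def
        by (rule has_vector_derivative_eq_rhs) (simp add: sz[symmetric] power2_eq_square algebra_simps)
    qed
    have bnds: "cmod (F x) \<le> A0 * e \<and> cmod (F1 x) \<le> A0 * e \<and> cmod (F2 x) \<le> B0 * (1 + cmod s) * e"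
      if x: "x \<in> {0..pi}" for x
    proof (cases "cmod s \<ge> 1")
      case True
      have yb: "\<And>t. t \<in> {0..pi} \<Longrightarrow> cmod (y t) \<le> K * exp (\<bar>Im s\<bar> * t)"
        unfolding K_def by (rule xi_large[OF y0 y'0 dy dy' bV sz True])
      have yb2: "\<And>t. t \<in> {0..pi} \<Longrightarrow> cmod (y t) \<le> K * exp (\<bar>Im (-s)\<bar> * t)"
        using yb by simp
      have sz2: "(-s)^2 = z" using sz by simp
      have P1: "cmod (y' x + \<i> * s * y x - \<i> * s * exp (\<i> * s * of_real x)) \<le> M * K * pi * exp (\<bar>Im s\<bar> * x)"
        by (rule P_bound[OF y0 y'0 dy dy' bV sz K0(1) yb x])
      have P2: "cmod (y' x + \<i> * (-s) * y x - \<i> * (-s) * exp (\<i> * (-s) * of_real x)) \<le> M * K * pi * exp (\<bar>Im (-s)\<bar> * x)"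
        by (rule P_bound[OF y0 y'0 dy dy' bV sz2 K0(1) yb2 x])
      have eu1: "exp (\<i> * s * of_real x) = cos (s * of_real x) + \<i> * sin (s * of_real x)"
        using exp_Euler[of "s * of_real x"] by (simp add: mult.assoc)
      have eu2: "exp (\<i> * (-s) * of_real x) = cos (s * of_real x) - \<i> * sin (s * of_real x)"
        using exp_Euler[of "- (s * of_real x)"] by (simp add: mult.assoc)
      have id1: "y' x + \<i> * s * y x - \<i> * s * exp (\<i> * s * of_real x) = F1 x + \<i> * s * F x"
        unfolding eu1 F_def F1_def by (simp add: algebra_simps)
      have id2: "y' x + \<i> * (-s) * y x - \<i> * (-s) * exp (\<i> * (-s) * of_real x) = F1 x - \<i> * s * F x"
        unfolding eu2 F_def F1_def by (simp add: algebra_simps)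
      define D where "D = M * K * pi * exp (\<tau> * x)"
      have Pb: "cmod (F1 x + \<i> * s * F x) \<le> D" "cmod (F1 x - \<i> * s * F x) \<le> D"
        using P1 P2 id1 id2 by (simp_all add: D_def \<tau>_def)
      have "cmod (2 * F1 x) \<le> 2 * D"
      proof -
        have "2 * F1 x = (F1 x + \<i> * s * F x) + (F1 x - \<i> * s * F x)" by simp
        then have "cmod (2 * F1 x) \<le> cmod (F1 x + \<i> * s * F x) + cmod (F1 x - \<i> * s * F x)"
          by (metis norm_triangle_ineq)
        then show ?thesis using Pb by simp
      qed
      then have bF1: "cmod (F1 x) \<le> D" by (simp add: norm_mult)
      have "cmod (2 * \<i> * s * F x) \<le> 2 * D"
      proof -
        have "2 * \<i> * s * F x = (F1 x + \<i> * s * F x) - (F1 x - \<i> * s * F x)" by simp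
        then have "cmod (2 * \<i> * s * F x) \<le> cmod (F1 x + \<i> * s * F x) + cmod (F1 x - \<i> * s * F x)"
          by (metis norm_triangle_ineq4)
        then show ?thesis using Pb by simp
      qed
      then have bsF: "cmod s * cmod (F x) \<le> D" by (simp add: norm_mult)
      have bF: "cmod (F x) \<le> D"
        using bsF mult_right_mono[OF True norm_ge_zero[of "F x"]] by simp
      have De: "D \<le> M * K * pi * e"
      proof -
        have "exp (\<tau> * x) \<le> e" using x by (auto simp: e_def \<tau>_def intro!: mult_left_mono)
        then show ?thesis unfolding D_def using M0 K0 by (intro mult_left_mono) (auto simp: mult_nonneg_nonneg)
      qed
      have MKe: "M * K * pi * e \<le> A0 * e"
        using e1 K0 M0 by (intro mult_right_mono) (auto simp: A0_def)
      have "cmod (F2 x) \<le> cmod (of_real (V x) * y x) + cmod (z * F x)"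
        unfolding F2_def by (rule norm_triangle_ineq4)
      also have "cmod (of_real (V x) * y x) \<le> M * (K * e)"
      proof -
        have "cmod (y x) \<le> K * exp (\<tau> * x)" using yb[OF x] by (simp add: \<tau>_def)
        also have "\<dots> \<le> K * e" using x K0 by (auto simp: e_def \<tau>_def intro!: mult_left_mono)
        finally show ?thesis using bV[OF x] M0 by (simp add: norm_mult mult_mono)
      qed
      also have "cmod (z * F x) = cmod s * (cmod s * cmod (F x))"
        by (simp add: sz[symmetric] norm_mult norm_power power2_eq_square)
      also have "\<dots> \<le> cmod s * (M * K * pi * e)"
        using bsF De by (intro mult_left_mono) auto
      also have "M * (K * e) + cmod s * (M * K * pi * e) \<le> B0 * (1 + cmod s) * e"
      proof -
        have "M * (K * e) + cmod s * (M * K * pi * e) \<le> (M * K + M * K * pi) * (1 + cmod s) * e"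
          using M0 K0 e1 by (simp add: algebra_simps mult_nonneg_nonneg)
        also have "\<dots> \<le> B0 * (1 + cmod s) * e"
          using M0 K0 e1 by (intro mult_right_mono) (auto simp: B0_def)
        finally show ?thesis .
      qed
      finally show ?thesis using bF bF1 De MKe by linarith
    next
      case False
      then have s1: "cmod s \<le> 1" by simp
      have z1: "cmod z \<le> 1" using s1
        by (simp add: sz[symmetric] norm_power power_le_one)
      have ys: "cmod (y x) \<le> K1" "cmod (y' x) \<le> K1"
        using xi_small[OF y0 y'0 dy dy' bV z1 x] by (auto simp: K1_def)
      have sx: "cmod (s * of_real x) \<le> pi"
      proof -
        have "cmod (s * of_real x) = cmod s * x" using x by (simp add: norm_mult)
        also have "\<dots> \<le> 1 * pi" using s1 x by (intro mult_mono) auto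
        finally show ?thesis by simp
      qed
      have cb: "cmod (cos (s * of_real x)) \<le> exp pi"
        using norm_cos_le[of "s * of_real x"] sx by (meson exp_le_cancel_iff order_trans)
      have sb: "cmod (sin (s * of_real x)) \<le> exp pi"
      proof -
        have "cmod (sin (1 *\<^sub>R (s * of_real x))) \<le> exp \<bar>Im (s * of_real x)\<bar>"
          by (rule cmod_sin_le_exp) auto
        moreover have "\<bar>Im (s * of_real x)\<bar> \<le> pi" using abs_Im_le_cmod[of "s * of_real x"] sx by linarith
        ultimately show ?thesis using order_trans[of _ "exp \<bar>Im (s * of_real x)\<bar>" "exp pi"] by simp
      qed
      have bF: "cmod (F x) \<le> K1 + exp pi"
        unfolding F_def using ys cb norm_triangle_ineq4[of "y x" "cos (s * of_real x)"] by linarith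
      have "cmod (s * sin (s * of_real x)) \<le> exp pi"
        using mult_mono[OF s1 sb] by (simp add: norm_mult)
      then have bF1: "cmod (F1 x) \<le> K1 + exp pi"
        unfolding F1_def using ys norm_triangle_ineq[of "y' x" "s * sin (s * of_real x)"] by linarith
      have "cmod (F2 x) \<le> cmod (of_real (V x) * y x) + cmod (z * F x)"
        unfolding F2_def by (rule norm_triangle_ineq4)
      also have "cmod (of_real (V x) * y x) \<le> M * K1"
        using bV[OF x] ys M0 by (simp add: norm_mult mult_mono)
      also have "cmod (z * F x) \<le> 1 * (K1 + exp pi)"
        unfolding norm_mult using z1 bF by (intro mult_mono) auto
      finally have bF2': "cmod (F2 x) \<le> M * K1 + K1 + exp pi" by simp
      have "M * K1 + K1 + exp pi \<le> B0" using M0 K0 by (simp add: B0_def mult_nonneg_nonneg)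
      also have "B0 \<le> B0 * (1 + cmod s) * e"
      proof -
        have "1 * 1 \<le> (1 + cmod s) * e" using e1 by (intro mult_mono) auto
        then have "B0 * 1 \<le> B0 * ((1 + cmod s) * e)" using B00 by (intro mult_left_mono) auto
        then show ?thesis by (simp add: mult.assoc)
      qed
      finally have bF2: "cmod (F2 x) \<le> B0 * (1 + cmod s) * e" using bF2' by linarith
      have "K1 + exp pi \<le> A0" using M0 K0 by (simp add: A0_def mult_nonneg_nonneg)
      also have "A0 \<le> A0 * e" using A00 e1 by (simp add: mult_le_cancel_left1)
      finally have "K1 + exp pi \<le> A0 * e" .
      then show ?thesis using bF bF1 bF2 by linarith
    qed
    have I: "cmod (integral {0..pi} (\<lambda>x. F x * of_real (R_api a x) * of_real (cos (real n * x))))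
         \<le> W * (A0 * e + B0 * (1 + cmod s) * e) / (real n)^2"
      unfolding W_def
      by (rule ibp[OF assms(2,3) n dF dF1]) (use bnds in auto)
    define G where "G = 1 + (1 + cmod z) / (1 + pi * sqrt (cmod z))"
    have "W * (A0 * e + B0 * (1 + cmod s) * e) \<le> W * ((A0 + B0) * (1 + cmod s) * e)"
      using W0 A00 B00 e1 by (intro mult_left_mono) (auto simp: algebra_simps)
    also have "\<dots> \<le> W * ((A0 + B0) * (2 * pi * G) * e)"
    proof -
      have cz: "cmod z = (cmod s)^2" by (simp add: sz[symmetric] norm_power)
      have "1 + cmod s \<le> 2 * pi * G"
        using G_bound[of "cmod s"] by (simp add: cz G_def)
      then show ?thesis using W0 A00 B00 e1
        by (intro mult_left_mono mult_right_mono) auto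
    qed
    also have "\<dots> \<le> C * e * G"
    proof -
      have G0: "0 \<le> G" by (simp add: G_def add_nonneg_nonneg pi_ge_zero)
      have "W * ((A0 + B0) * (2 * pi * G) * e)
          = (W * (A0 + B0) * (2 * pi)) * e * G"
        by (simp add: algebra_simps)
      also have "\<dots> \<le> C * e * G"
        using G0 e1 by (intro mult_right_mono) (auto simp: C_def)
      finally show ?thesis .
    qed
    finally have "W * (A0 * e + B0 * (1 + cmod s) * e) / (real n)^2
        \<le> C * e * G / (real n)^2"
      by (intro divide_right_mono) auto
    with I show "cmod (integral {0..pi} (\<lambda>x. (xi x z - cos (csqrt z * complex_of_real x))
                    * complex_of_real (R_api a x) * complex_of_real (cos (real n * x))))
           \<le> C * exp (pi * \<bar>Im (csqrt z)\<bar>) / (real n)\<^sup>2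
               * G"
      by (simp add: F_def[abs_def] y_def s_def e_def \<tau>_def G_def mult.commute)
  qed
qed

end
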